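(* Let $G$ be a Polish group, $X$ a Polish space with a continuous $G$-action, $F\subseteq E^X_G$ a Borel equivalence relation on $X$, and $C\subseteq X$ a set such that for every $x\in C$ there is an open neighbourhood $V\subseteq G$ of $1_G$ with $V\cdot x\cap C\subseteq[x]_F$, and such that $G(x,C)$ is comeager in $G$ for every $x\in X$. Then for all $x,y\in C$: $$(x,y)\in E^X_G\iff\{(a,b)\in G\times G:(a\cdot x,b\cdot y)\in F\}\text{ is non-meager in }G\times G.$$
   Context: $E^X_G=\{(x,y):\exists g\in G\ g\cdot x=y\}$; $[x]_F$ is the $F$-class of $x$; $G(x,A)=\{g\in G:g\cdot x\in A\}$. *)

theory Defs
  imports "HOL-Analysis.Analysis"
begin

definition nowhere_dense :: "'a::topological_space set \<Rightarrow> bool" where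
  "nowhere_dense A \<longleftrightarrow> interior (closure A) = {}"

definition meager :: "'a::topological_space set \<Rightarrow> bool" where
  "meager A \<longleftrightarrow> (\<exists>N :: nat \<Rightarrow> 'a set. (\<forall>n. nowhere_dense (N n)) \<and> A \<subseteq> (\<Union>n. N n))"

definition comeager :: "'a::topological_space set \<Rightarrow> bool" where
  "comeager A \<longleftrightarrow> meager (- A)"

text \<open>A continuous (left) action of the topological group 'g (written additively,
  not necessarily commutative) on the space 'x.\<close>
definition continuous_action :: "('g::topological_group_add \<Rightarrow> 'x::topological_space \<Rightarrow> 'x) \<Rightarrow> bool" where
  "continuous_action act \<longleftrightarrow>
     (\<forall>x. act 0 x = x) \<and> (\<forall>g h x. act (g + h) x = act g (act h x)) \<and>
     continuous_on UNIV (\<lambda>p. act (fst p) (snd p))"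

definition orbit_rel :: "('g \<Rightarrow> 'x \<Rightarrow> 'x) \<Rightarrow> ('x \<times> 'x) set" where
  "orbit_rel act = {(x, y). \<exists>g. act g x = y}"

definition return_set :: "('g \<Rightarrow> 'x \<Rightarrow> 'x) \<Rightarrow> 'x \<Rightarrow> 'x set \<Rightarrow> 'g set" where
  "return_set act x A = {g. act g x \<in> A}"

end

theory Submission imports Defs begin
lemma nonempty_open_not_meager:
  fixes U :: "'a::complete_space set"
  assumes "open U" "U \<noteq> {}" shows "\<not> meager U"
proof
  assume "meager U"
  then obtain N :: "nat \<Rightarrow> 'a set" where N: "\<And>n. nowhere_dense (N n)" "U \<subseteq> (\<Union>n. N n)"
    unfolding meager_def by blast
  have "euclidean interior_of \<Union>(range (\<lambda>n. closure (N n))) = {}"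
  proof (rule Baire_category_alt)
    show "completely_metrizable_space (euclidean :: 'a topology) \<or> locally_compact_space (euclidean :: 'a topology) \<and> regular_space (euclidean :: 'a topology)"
      using completely_metrizable_space_euclidean by (rule disjI1)
    show "countable (range (\<lambda>n. closure (N n)))" by (rule countable_image) simp
    fix T assume "T \<in> range (\<lambda>n. closure (N n))"
    then obtain n where T: "T = closure (N n)" by blast
    show "closedin euclidean T \<and> euclidean interior_of T = {}"
      unfolding T using N(1)[of n] by (simp add: nowhere_dense_def)
  qed
  then have I: "interior (\<Union>n. closure (N n)) = {}" by simp
  have "U \<subseteq> interior (\<Union>n. closure (N n))"
  proof (rule interior_maximal[OF _ assms(1)])
    have "(\<Union>n. N n) \<subseteq> (\<Union>n. closure (N n))" using closure_subset by blast
    then show "U \<subseteq> (\<Union>n. closure (N n))" by (rule order_trans[OF N(2)])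
  qed
  then have "U = {}" unfolding I by (rule subset_empty[THEN iffD1])
  then show False using assms(2) by (rule notE[rotated])
qed

lemma meagerI: "(\<And>n::nat. nowhere_dense (N n)) \<Longrightarrow> A \<subseteq> (\<Union>n. N n) \<Longrightarrow> meager A"
  unfolding meager_def by (intro exI[of _ N] conjI allI)

lemma meagerE: assumes "meager A"
  obtains N :: "nat \<Rightarrow> _" where "\<And>n. nowhere_dense (N n)" "A \<subseteq> (\<Union>n. N n)"
  using assms unfolding meager_def by auto

lemma meager_subset: assumes "meager B" "A \<subseteq> B" shows "meager A"
proof -
  obtain N :: "nat \<Rightarrow> _" where N: "\<And>n. nowhere_dense (N n)" "B \<subseteq> (\<Union>n. N n)" using meagerE[OF assms(1)] by blast
  show ?thesis by (rule meagerI[OF N(1) order_trans[OF assms(2) N(2)]])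
qed

lemma meager_Un: assumes "meager A" "meager B" shows "meager (A \<union> B)"
proof -
  obtain N :: "nat \<Rightarrow> _" where N: "\<And>n. nowhere_dense (N n)" "A \<subseteq> (\<Union>n. N n)" using meagerE[OF assms(1)] by blast
  obtain M :: "nat \<Rightarrow> _" where M: "\<And>n. nowhere_dense (M n)" "B \<subseteq> (\<Union>n. M n)" using meagerE[OF assms(2)] by blast
  define K where "K n = (if even n then N (n div 2) else M (n div 2))" for n
  have K: "nowhere_dense (K n)" for n using N(1) M(1) by (simp add: K_def)
  have "A \<union> B \<subseteq> (\<Union>n. K n)"
  proof
    fix z assume "z \<in> A \<union> B"
    then show "z \<in> (\<Union>n. K n)"
    proof
      assume "z \<in> A" then obtain n where "z \<in> N n" using N(2) by auto
      then have "z \<in> K (2*n)" by (simp add: K_def)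
      then show ?thesis by (rule UN_I[rotated]) simp
    next
      assume "z \<in> B" then obtain n where "z \<in> M n" using M(2) by auto
      then have "z \<in> K (2*n+1)" by (simp add: K_def)
      then show ?thesis by (rule UN_I[rotated]) simp
    qed
  qed
  then show ?thesis by (rule meagerI[OF K])
qed

lemma meager_Times_UNIV: assumes "meager (A :: 'a::topological_space set)"
  shows "meager (A \<times> (UNIV :: 'b::topological_space set))"
proof -
  obtain N :: "nat \<Rightarrow> _" where N: "\<And>n. nowhere_dense (N n)" "A \<subseteq> (\<Union>n. N n)" using meagerE[OF assms] by blast
  have K: "nowhere_dense (N n \<times> (UNIV :: 'b set))" for n
    using N(1)[of n] by (simp add: nowhere_dense_def closure_Times interior_Times)
  have "A \<times> (UNIV :: 'b set) \<subseteq> (\<Union>n. N n \<times> UNIV)" using N(2) by auto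
  then show ?thesis by (rule meagerI[OF K])
qed

lemma meager_UNIV_Times: assumes "meager (A :: 'a::topological_space set)"
  shows "meager ((UNIV :: 'b::topological_space set) \<times> A)"
proof -
  obtain N :: "nat \<Rightarrow> _" where N: "\<And>n. nowhere_dense (N n)" "A \<subseteq> (\<Union>n. N n)" using meagerE[OF assms] by blast
  have K: "nowhere_dense ((UNIV :: 'b set) \<times> N n)" for n
    using N(1)[of n] by (simp add: nowhere_dense_def closure_Times interior_Times)
  have "(UNIV :: 'b set) \<times> A \<subseteq> (\<Union>n. UNIV \<times> N n)" using N(2) by auto
  then show ?thesis by (rule meagerI[OF K])
qed

theorem mainTheorem10:
  fixes act :: "'g::{polish_space, topological_group_add} \<Rightarrow> 'x::polish_space \<Rightarrow> 'x"
    and F :: "('x \<times> 'x) set" and C :: "'x set"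
  assumes "continuous_action act"
    and "equiv UNIV F"
    and "F \<in> sets borel"
    and "F \<subseteq> orbit_rel act"
    and "\<forall>x\<in>C. \<exists>V. open V \<and> 0 \<in> V \<and> (\<lambda>g. act g x) ` V \<inter> C \<subseteq> F `` {x}"
    and "\<forall>x. comeager (return_set act x C)"
    and "x \<in> C" and "y \<in> C"
  shows "(x, y) \<in> orbit_rel act \<longleftrightarrow>
         \<not> meager {p :: 'g \<times> 'g. (act (fst p) x, act (snd p) y) \<in> F}"
    (is "_ \<longleftrightarrow> \<not> meager ?S")
proof
  have act0: "\<And>z. act 0 z = z" and actp: "\<And>g h z. act (g + h) z = act g (act h z)"
    using assms(1) unfolding continuous_action_def by auto
  assume "(x, y) \<in> orbit_rel act"
  then obtain h where h: "act h x = y" unfolding orbit_rel_def by auto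
  obtain V where V: "open V" "0 \<in> V" "(\<lambda>g. act g x) ` V \<inter> C \<subseteq> F `` {x}"
    using assms(5) assms(7) by blast
  define D where "D = return_set act x C"
  define Dy where "Dy = return_set act y C"
  define T where "T = V \<times> {b. b + h \<in> V}"
  have "open {b. b + h \<in> V}"
  proof -
    have "continuous_on UNIV (\<lambda>b::'g. b + h)" by (intro continuous_intros)
    then show ?thesis using V(1) by (simp add: continuous_on_open_vimage vimage_def)
  qed
  then have oT: "open T" unfolding T_def using V(1) by (simp add: open_Times)
  have "(0, -h) \<in> T" unfolding T_def using V(2) by simp
  then have neT: "T \<noteq> {}" by blast
  have sub: "T \<inter> (D \<times> Dy) \<subseteq> ?S"
  proof clarify
    fix a b assume ab: "(a, b) \<in> T" "a \<in> D" "b \<in> Dy"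
    have "(x, act a x) \<in> F" using V(3) ab(1,2) by (auto simp: T_def D_def return_set_def)
    moreover have "act b y = act (b + h) x" using h actp by simp
    moreover have "(x, act (b + h) x) \<in> F" using V(3) ab(1,3) h actp
      by (auto simp: T_def Dy_def return_set_def)
    ultimately have F2: "(x, act b y) \<in> F" by simp
    have symF: "sym F" and transF: "trans F" using assms(2) unfolding equiv_def by simp_all
    have "(act a x, x) \<in> F" using symF \<open>(x, act a x) \<in> F\<close> by (rule symD)
    then have "(act a x, act b y) \<in> F" using F2 by (rule transD[OF transF])
    then show "(act (fst (a, b)) x, act (snd (a, b)) y) \<in> F" by simp
  qed
  show "\<not> meager ?S"
  proof
    assume "meager ?S"
    have mD: "meager (- D)" using assms(6) unfolding D_def comeager_def by simp
    have mDy: "meager (- Dy)" using assms(6) unfolding Dy_def comeager_def by simp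
    have m1: "meager ((- D) \<times> (UNIV :: 'g set))" by (rule meager_Times_UNIV[OF mD])
    have m2: "meager ((UNIV :: 'g set) \<times> (- Dy))" by (rule meager_UNIV_Times[OF mDy])
    have m3: "meager (?S \<union> ((- D) \<times> UNIV \<union> UNIV \<times> (- Dy)))"
      by (rule meager_Un[OF \<open>meager ?S\<close> meager_Un[OF m1 m2]])
    have "T \<subseteq> ?S \<union> ((- D) \<times> UNIV \<union> UNIV \<times> (- Dy))" using sub by auto
    then have "meager T" by (rule meager_subset[OF m3])
    then show False using nonempty_open_not_meager[OF oT neT] by (rule notE[rotated])
  qed
next
  assume "\<not> meager ?S"
  moreover have "meager ({} :: ('g \<times> 'g) set)" unfolding meager_def nowhere_dense_def
    by (rule exI[of _ "\<lambda>n. {}"]) simp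
  ultimately have "?S \<noteq> {}" by (cases "?S = {}") (simp only:, simp)
  then obtain p where "p \<in> ?S" by blast
  then have "(act (fst p) x, act (snd p) y) \<in> F" by simp
  then obtain a b where "(act a x, act b y) \<in> F" by blast
  then obtain g where g: "act g (act a x) = act b y" using assms(4) unfolding orbit_rel_def by auto
  have act0: "\<And>z. act 0 z = z" and actp: "\<And>g h z. act (g + h) z = act g (act h z)"
    using assms(1) unfolding continuous_action_def by auto
  have "act (-b + (g + a)) x = act (-b) (act g (act a x))" by (simp add: actp)
  also have "\<dots> = act (-b) (act b y)" using g by simp
  also have "\<dots> = act (-b + b) y" by (simp only: actp)
  also have "\<dots> = y" by (simp add: act0)
  finally have "act (-b + (g + a)) x = y" .
  then show "(x, y) \<in> orbit_rel act" unfolding orbit_rel_def by auto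
qed
end
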